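(* Assume the bound condition (B) holds with constants $A,D>0$ and that $\max\{\Delta x,\Delta y\}\le 2D/A$. Let $f$ be arbitrary (not necessarily zero) and let $\psi,\tilde\psi$ be two initial data. Let $v$ be a grid function satisfying the scheme (IFDS) with initial datum $\psi$ and $\tilde v$ a grid function satisfying the scheme (IFDS) with the same $a,b,c,d,f$ and initial datum $\tilde\psi$. Put $\varepsilon_{i,j}^k=v_{i,j}^k-\tilde v_{i,j}^k$ and $\|E^k\|_\infty=\max_{1\le i\le N_x-1,\,1\le j\le N_y-1}|\varepsilon_{i,j}^k|$. Then $$\|E^k\|_\infty\le\|E^0\|_\infty\qquad\text{for all }k=1,\dots,N_t.$$
   Context: Fix $0<\alpha<1$, $T>0$ and a rectangle $\Omega=(x_L,x_R)\times(y_L,y_R)$. Let $a,b,c,d,f$ be real functions on $\overline\Omega\times[0,T]$ and $\psi$ a real function on $\overline\Omega$. Grid: for positive integers $N_x,N_y,N_t$ put $\Delta x=(x_R-x_L)/N_x$, $\Delta y=(y_R-y_L)/N_y$, $\Delta t=T/N_t$, $x_i=x_L+i\Delta x$, $y_j=y_L+j\Delta y$, $t_k=k\Delta t$, and for a function $g$ write $g_{i,j}^k=g(x_i,y_j,t_k)$. Let $\sigma_{\alpha,\Delta t}=\frac{1}{(\Delta t)^\alpha\Gamma(2-\alpha)}$ and $\omega_s=(s+1)^{1-\alpha}-s^{1-\alpha}$ for $s\ge0$. Scheme (IFDS) with initial datum $\psi$: a grid function $(v_{i,j}^k)_{0\le i\le N_x,\,0\le j\le N_y,\,0\le k\le N_t}$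 with $v_{i,j}^0=\psi(x_i,y_j)$, $v_{i,j}^k=0$ whenever $i\in\{0,N_x\}$ or $j\in\{0,N_y\}$ (for $k\ge1$), and for all $1\le i\le N_x-1$, $1\le j\le N_y-1$, $0\le k\le N_t-1$: $$\sigma_{\alpha,\Delta t}\sum_{s=0}^{k}\omega_s\big(v_{i,j}^{k-s+1}-v_{i,j}^{k-s}\big)+a_{i,j}^{k+1}\frac{v_{i+1,j}^{k+1}-v_{i-1,j}^{k+1}}{2\Delta x}+b_{i,j}^{k+1}\frac{v_{i,j+1}^{k+1}-v_{i,j-1}^{k+1}}{2\Delta y}$$ $$=c_{i,j}^{k+1}\frac{v_{i+1,j}^{k+1}-2v_{i,j}^{k+1}+v_{i-1,j}^{k+1}}{(\Delta x)^2}+d_{i,j}^{k+1}\frac{v_{i,j+1}^{k+1}-2v_{i,j}^{k+1}+v_{i,j-1}^{k+1}}{(\Delta y)^2}+f_{i,j}^{k+1}.$$ Bound condition (B): there are constants $A>0$, $D>0$ such that for all $(x,y,t)\in\overline\Omega\times[0,T]$: $0\le a(x,y,t)\le A$, $0\le b(x,y,t)\le A$, $c(x,y,t)\ge D$, $d(x,y,t)\ge D$. *)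

theory Defs
  imports "HOL-Analysis.Analysis"
begin

definition sigma_coef :: "real \<Rightarrow> real \<Rightarrow> real" where
  "sigma_coef \<alpha> dt = 1 / (dt powr \<alpha> * Gamma (2 - \<alpha>))"

definition omega :: "real \<Rightarrow> nat \<Rightarrow> real" where
  "omega \<alpha> s = (real s + 1) powr (1 - \<alpha>) - (real s) powr (1 - \<alpha>)"

text \<open>The scheme (IFDS): v i j k stands for v_{i,j}^k. Coefficient functions take (x,y,t).\<close>
definition IFDS ::
  "real \<Rightarrow> real \<Rightarrow> real \<Rightarrow> real \<Rightarrow> real \<Rightarrow> real \<Rightarrow> nat \<Rightarrow> nat \<Rightarrow> nat \<Rightarrow>
   (real \<Rightarrow> real \<Rightarrow> real \<Rightarrow> real) \<Rightarrow> (real \<Rightarrow> real \<Rightarrow> real \<Rightarrow> real) \<Rightarrow>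
   (real \<Rightarrow> real \<Rightarrow> real \<Rightarrow> real) \<Rightarrow> (real \<Rightarrow> real \<Rightarrow> real \<Rightarrow> real) \<Rightarrow>
   (real \<Rightarrow> real \<Rightarrow> real \<Rightarrow> real) \<Rightarrow> (real \<Rightarrow> real \<Rightarrow> real) \<Rightarrow>
   (nat \<Rightarrow> nat \<Rightarrow> nat \<Rightarrow> real) \<Rightarrow> bool" where
  "IFDS \<alpha> T xL xR yL yR Nx Ny Nt a b c d f \<psi> v \<longleftrightarrow>
    (let dx = (xR - xL) / real Nx; dy = (yR - yL) / real Ny; dt = T / real Nt;
         X = (\<lambda>i. xL + real i * dx); Y = (\<lambda>j. yL + real j * dy); Tm = (\<lambda>k. real k * dt)
     in (\<forall>i\<le>Nx. \<forall>j\<le>Ny. v i j 0 = \<psi> (X i) (Y j))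
      \<and> (\<forall>i\<le>Nx. \<forall>j\<le>Ny. \<forall>k. 1 \<le> k \<and> k \<le> Nt \<and> (i = 0 \<or> i = Nx \<or> j = 0 \<or> j = Ny) \<longrightarrow> v i j k = 0)
      \<and> (\<forall>i j k. 1 \<le> i \<and> i \<le> Nx - 1 \<and> 1 \<le> j \<and> j \<le> Ny - 1 \<and> k \<le> Nt - 1 \<longrightarrow>
           sigma_coef \<alpha> dt * (\<Sum>s=0..k. omega \<alpha> s * (v i j (k - s + 1) - v i j (k - s)))
           + a (X i) (Y j) (Tm (k+1)) * (v (i+1) j (k+1) - v (i-1) j (k+1)) / (2 * dx)
           + b (X i) (Y j) (Tm (k+1)) * (v i (j+1) (k+1) - v i (j-1) (k+1)) / (2 * dy)
           = c (X i) (Y j) (Tm (k+1)) * (v (i+1) j (k+1) - 2 * v i j (k+1) + v (i-1) j (k+1)) / dx\<^sup>2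
           + d (X i) (Y j) (Tm (k+1)) * (v i (j+1) (k+1) - 2 * v i j (k+1) + v i (j-1) (k+1)) / dy\<^sup>2
           + f (X i) (Y j) (Tm (k+1))))"

definition err_norm :: "nat \<Rightarrow> nat \<Rightarrow> (nat \<Rightarrow> nat \<Rightarrow> nat \<Rightarrow> real) \<Rightarrow> nat \<Rightarrow> real" where
  "err_norm Nx Ny e k = Max {\<bar>e i j k\<bar> | i j. 1 \<le> i \<and> i \<le> Nx - 1 \<and> 1 \<le> j \<and> j \<le> Ny - 1}"

end

theory Submission
  imports Defs
begin


lemma omega0: "omega \<alpha> 0 = 1"
  unfolding omega_def by simp

lemma omega_nonneg: assumes "\<alpha> < 1" shows "0 \<le> omega \<alpha> s"
  unfolding omega_def using assms by (simp add: powr_mono2)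

lemma omega_decr: assumes "0 < \<alpha>" "\<alpha> < 1" shows "omega \<alpha> (Suc s) \<le> omega \<alpha> s"
proof (cases "s = 0")
  case True
  have "(2::real) powr (1 - \<alpha>) \<le> 2 powr 1" using assms by (intro powr_mono) auto
  then show ?thesis using True unfolding omega_def by simp
next
  case False
  define \<beta> where "\<beta> = 1 - \<alpha>"
  have b: "0 < \<beta>" "\<beta> < 1" using assms by (auto simp: \<beta>_def)
  define g where "g = (\<lambda>x::real. (x + 1) powr \<beta> - x powr \<beta>)"
  have "g (real s + 1) \<le> g (real s)"
  proof (rule DERIV_nonpos_imp_decreasing_open[of "real s" "real s + 1" g])
    fix x assume x: "real s < x" "x < real s + 1"
    have xp: "x > 0" using x False by linarith
    have "(g has_real_derivative (\<beta> * (x+1) powr (\<beta> - 1) - \<beta> * x powr (\<beta> - 1))) (at x)"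
    proof -
      have d1: "((\<lambda>x. x powr \<beta>) has_real_derivative \<beta> * (x+1) powr (\<beta>-1)) (at (x+1))"
        using xp by (intro has_real_derivative_powr) auto
      have d1': "((\<lambda>x. (x+1) powr \<beta>) has_real_derivative \<beta> * (x+1) powr (\<beta>-1)) (at x)"
        using d1 DERIV_shift[of "\<lambda>x. x powr \<beta>"] by simp
      have d2: "((\<lambda>x. x powr \<beta>) has_real_derivative \<beta> * x powr (\<beta>-1)) (at x)"
        using xp by (intro has_real_derivative_powr) auto
      show ?thesis unfolding g_def using DERIV_diff[OF d1' d2] by simp
    qed
    moreover have "(x+1) powr (\<beta> - 1) \<le> x powr (\<beta> - 1)"
      using xp b by (intro powr_mono2') auto
    ultimately show "\<exists>y. (g has_real_derivative y) (at x) \<and> y \<le> 0"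
      using b by (intro exI[of _ "\<beta> * (x+1) powr (\<beta> - 1) - \<beta> * x powr (\<beta> - 1)"])
        (auto simp: mult_left_mono)
  next
    show "continuous_on {real s..real s + 1} g" unfolding g_def using False
      by (intro continuous_intros) auto
  qed simp
  then show ?thesis unfolding omega_def g_def \<beta>_def by (simp add: add.commute)
qed

lemma abel:
  fixes g u :: "nat \<Rightarrow> real"
  shows "(\<Sum>s=0..k. g s * (u (k - s + 1) - u (k - s)))
     = g 0 * u (k+1) - g k * u 0 - (\<Sum>s<k. (g s - g (s+1)) * u (k - s))"
proof (induction k arbitrary: g)
  case 0 then show ?case by (simp add: algebra_simps)
next
  case (Suc k)
  have "(\<Sum>s=0..Suc k. g s * (u (Suc k - s + 1) - u (Suc k - s)))
     = g 0 * (u (k+2) - u (k+1)) + (\<Sum>s=0..k. g (Suc s) * (u (k - s + 1) - u (k - s)))"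
    by (subst sum.atLeast0_atMost_Suc_shift) (simp add: Suc_diff_le)
  also have "\<dots> = g 0 * (u (k+2) - u (k+1)) + (g 1 * u (k+1) - g (Suc k) * u 0
      - (\<Sum>s<k. (g (Suc s) - g (Suc s + 1)) * u (k - s)))"
    using Suc[of "\<lambda>s. g (Suc s)"] by simp
  also have "(\<Sum>s<Suc k. (g s - g (s+1)) * u (Suc k - s)) =
      (g 0 - g 1) * u (k+1) + (\<Sum>s<k. (g (Suc s) - g (Suc s + 1)) * u (k - s))"
    by (subst sum.lessThan_Suc_shift) simp
  ultimately show ?case by (simp add: algebra_simps)
qed

lemma telesc: fixes g :: "nat \<Rightarrow> real" shows "(\<Sum>s<k. (g s - g (s+1))) = g 0 - g k"
  by (induction k) auto

lemma hist_bound: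
  fixes g u :: "nat \<Rightarrow> real"
  assumes "\<And>s. 0 \<le> g s" "\<And>s. g (Suc s) \<le> g s" "\<And>m. m \<le> k \<Longrightarrow> \<bar>u m\<bar> \<le> M"
  shows "\<bar>(\<Sum>s<k. (g s - g (s+1)) * u (k - s)) + g k * u 0\<bar> \<le> g 0 * M"
proof -
  have "\<bar>(\<Sum>s<k. (g s - g (s+1)) * u (k - s)) + g k * u 0\<bar>
     \<le> (\<Sum>s<k. \<bar>(g s - g (s+1)) * u (k - s)\<bar>) + \<bar>g k * u 0\<bar>"
    by (rule order_trans[OF abs_triangle_ineq]) (simp add: sum_abs)
  also have "\<dots> \<le> (\<Sum>s<k. (g s - g (s+1)) * M) + g k * M"
  proof (intro add_mono sum_mono)
    fix s assume "s \<in> {..<k}"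
    then show "\<bar>(g s - g (s+1)) * u (k - s)\<bar> \<le> (g s - g (s+1)) * M"
      using assms(2)[of s] assms(3)[of "k-s"] by (simp add: abs_mult mult_left_mono)
  next
    show "\<bar>g k * u 0\<bar> \<le> g k * M" using assms(1)[of k] assms(3)[of 0]
      by (simp add: abs_mult mult_left_mono)
  qed
  also have "\<dots> = (g 0 - g k) * M + g k * M" by (simp only: sum_distrib_right[symmetric] telesc)
  also have "\<dots> = g 0 * M" by algebra
  finally show ?thesis .
qed



lemma step_ineq:
  fixes \<sigma> a b c d dx dy p R ep em fp fm M0 :: real
  assumes s: "\<sigma> > 0" and dx: "dx > 0" and dy: "dy > 0"
    and a: "0 \<le> a" "a * dx \<le> 2 * c" and b: "0 \<le> b" "b * dy \<le> 2 * d"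
    and eq: "\<sigma> * (p - R) + a * (ep - em) / (2 * dx) + b * (fp - fm) / (2 * dy)
             = c * (ep - 2 * p + em) / dx\<^sup>2 + d * (fp - 2 * p + fm) / dy\<^sup>2"
    and R: "\<bar>R\<bar> \<le> M0"
    and n: "\<bar>ep\<bar> \<le> \<bar>p\<bar>" "\<bar>em\<bar> \<le> \<bar>p\<bar>" "\<bar>fp\<bar> \<le> \<bar>p\<bar>" "\<bar>fm\<bar> \<le> \<bar>p\<bar>"
  shows "\<bar>p\<bar> \<le> M0"
proof -
  define a1 where "a1 = c / dx\<^sup>2 - a / (2 * dx)"
  define a2 where "a2 = c / dx\<^sup>2 + a / (2 * dx)"
  define b1 where "b1 = d / dy\<^sup>2 - b / (2 * dy)"
  define b2 where "b2 = d / dy\<^sup>2 + b / (2 * dy)"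
  have a1: "a1 \<ge> 0"
  proof -
    have "a1 = (2 * c - a * dx) / (2 * dx\<^sup>2)" unfolding a1_def using dx
      by (simp add: field_simps power2_eq_square)
    then show ?thesis using a dx by simp
  qed
  have b1: "b1 \<ge> 0"
  proof -
    have "b1 = (2 * d - b * dy) / (2 * dy\<^sup>2)" unfolding b1_def using dy
      by (simp add: field_simps power2_eq_square)
    then show ?thesis using b dy by simp
  qed
  have "a / (2 * dx) \<ge> 0" "b / (2 * dy) \<ge> 0" using a b dx dy by auto
  then have a2: "a2 \<ge> 0" and b2: "b2 \<ge> 0" using a1 b1 unfolding a1_def a2_def b1_def b2_def by linarith+
  have key: "(\<sigma> + a1 + a2 + b1 + b2) * p = \<sigma> * R + a1 * ep + a2 * em + b1 * fp + b2 * fm"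
  proof -
    have e1: "a * (ep - em) / (2 * dx) = (a / (2*dx)) * (ep - em)"
      "b * (fp - fm) / (2 * dy) = (b / (2*dy)) * (fp - fm)"
      "c * (ep - 2 * p + em) / dx\<^sup>2 = (c / dx\<^sup>2) * (ep - 2 * p + em)"
      "d * (fp - 2 * p + fm) / dy\<^sup>2 = (d / dy\<^sup>2) * (fp - 2 * p + fm)" by simp_all
    have eq': "\<sigma> * (p - R) + (a / (2*dx)) * (ep - em) + (b / (2*dy)) * (fp - fm)
      = (c / dx\<^sup>2) * (ep - 2 * p + em) + (d / dy\<^sup>2) * (fp - 2 * p + fm)"
      using eq unfolding e1 .
    have gen: "\<And>A B C D::real. \<sigma> * (p - R) + A * (ep - em) + B * (fp - fm) = C * (ep - 2 * p + em) + D * (fp - 2 * p + fm)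
       \<Longrightarrow> (\<sigma> + (C - A) + (C + A) + (D - B) + (D + B)) * p = \<sigma> * R + (C - A) * ep + (C + A) * em + (D - B) * fp + (D + B) * fm"
      by (simp add: algebra_simps)
    show ?thesis using gen[OF eq'] unfolding a1_def a2_def b1_def b2_def .
  qed
  have "(\<sigma> + a1 + a2 + b1 + b2) * \<bar>p\<bar> = \<bar>\<sigma> * R + a1 * ep + a2 * em + b1 * fp + b2 * fm\<bar>"
    using key s a1 a2 b1 b2 by (metis abs_mult abs_of_nonneg add_nonneg_nonneg less_imp_le)
  also have "\<dots> \<le> \<sigma> * \<bar>R\<bar> + a1 * \<bar>ep\<bar> + a2 * \<bar>em\<bar> + b1 * \<bar>fp\<bar> + b2 * \<bar>fm\<bar>"
    using s a1 a2 b1 b2 by (simp add: abs_mult order_trans[OF abs_triangle_ineq] add_mono abs_triangle_ineq)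
  also have "\<dots> \<le> \<sigma> * M0 + a1 * \<bar>p\<bar> + a2 * \<bar>p\<bar> + b1 * \<bar>p\<bar> + b2 * \<bar>p\<bar>"
    using s a1 a2 b1 b2 R n by (intro add_mono mult_left_mono) auto
  finally have "\<sigma> * \<bar>p\<bar> \<le> \<sigma> * M0" by (simp add: algebra_simps)
  then show ?thesis using s by simp
qed



theorem mainTheorem2:
  fixes \<alpha> T xL xR yL yR A D :: real
    and Nx Ny Nt :: nat
    and a b c d f :: "real \<Rightarrow> real \<Rightarrow> real \<Rightarrow> real"
    and \<psi> \<psi>' :: "real \<Rightarrow> real \<Rightarrow> real"
    and v v' :: "nat \<Rightarrow> nat \<Rightarrow> nat \<Rightarrow> real"
  assumes "0 < \<alpha>" "\<alpha> < 1" "0 < T" "xL < xR" "yL < yR"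
    and "0 < Nx" "0 < Ny" "0 < Nt"
    and "0 < A" "0 < D"
    and B: "\<And>x y t. xL \<le> x \<Longrightarrow> x \<le> xR \<Longrightarrow> yL \<le> y \<Longrightarrow> y \<le> yR \<Longrightarrow> 0 \<le> t \<Longrightarrow> t \<le> T \<Longrightarrow>
            0 \<le> a x y t \<and> a x y t \<le> A \<and> 0 \<le> b x y t \<and> b x y t \<le> A \<and> D \<le> c x y t \<and> D \<le> d x y t"
    and "max ((xR - xL) / real Nx) ((yR - yL) / real Ny) \<le> 2 * D / A"
    and "IFDS \<alpha> T xL xR yL yR Nx Ny Nt a b c d f \<psi> v"
    and "IFDS \<alpha> T xL xR yL yR Nx Ny Nt a b c d f \<psi>' v'"
  shows "\<forall>k. 1 \<le> k \<and> k \<le> Nt \<longrightarrow>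
           err_norm Nx Ny (\<lambda>i j k. v i j k - v' i j k) k \<le> err_norm Nx Ny (\<lambda>i j k. v i j k - v' i j k) 0"
proof -
  define e where "e = (\<lambda>i j k. v i j k - v' i j k)"
  define dx where "dx = (xR - xL) / real Nx"
  define dy where "dy = (yR - yL) / real Ny"
  define dt where "dt = T / real Nt"
  define aa where "aa = (\<lambda>i j k. a (xL + real i * dx) (yL + real j * dy) (real (k + 1) * dt))"
  define bb where "bb = (\<lambda>i j k. b (xL + real i * dx) (yL + real j * dy) (real (k + 1) * dt))"
  define cc where "cc = (\<lambda>i j k. c (xL + real i * dx) (yL + real j * dy) (real (k + 1) * dt))"
  define dd where "dd = (\<lambda>i j k. d (xL + real i * dx) (yL + real j * dy) (real (k + 1) * dt))"
  define ff where "ff = (\<lambda>i j k. f (xL + real i * dx) (yL + real j * dy) (real (k + 1) * dt))"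
  define \<sigma> where "\<sigma> = sigma_coef \<alpha> dt"
  have dxp: "dx > 0" unfolding dx_def using assms by simp
  have dyp: "dy > 0" unfolding dy_def using assms by simp
  have dtp: "dt > 0" unfolding dt_def using assms by simp
  have sp: "\<sigma> > 0" unfolding \<sigma>_def sigma_coef_def using dtp assms(2)
    by (simp add: Gamma_real_pos)
  have bv: "\<And>i j k. i \<le> Nx \<Longrightarrow> j \<le> Ny \<Longrightarrow> 1 \<le> k \<Longrightarrow> k \<le> Nt \<Longrightarrow> (i = 0 \<or> i = Nx \<or> j = 0 \<or> j = Ny) \<Longrightarrow> v i j k = 0"
    using assms(13) unfolding IFDS_def Let_def by blast
  have bv': "\<And>i j k. i \<le> Nx \<Longrightarrow> j \<le> Ny \<Longrightarrow> 1 \<le> k \<Longrightarrow> k \<le> Nt \<Longrightarrow> (i = 0 \<or> i = Nx \<or> j = 0 \<or> j = Ny) \<Longrightarrow> v' i j k = 0"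
    using assms(14) unfolding IFDS_def Let_def by blast
  have sv: "\<And>i j k. 1 \<le> i \<Longrightarrow> i \<le> Nx - 1 \<Longrightarrow> 1 \<le> j \<Longrightarrow> j \<le> Ny - 1 \<Longrightarrow> k \<le> Nt - 1 \<Longrightarrow>
           \<sigma> * (\<Sum>s=0..k. omega \<alpha> s * (v i j (k - s + 1) - v i j (k - s)))
           + aa i j k * (v (i+1) j (k+1) - v (i-1) j (k+1)) / (2 * dx)
           + bb i j k * (v i (j+1) (k+1) - v i (j-1) (k+1)) / (2 * dy)
           = cc i j k * (v (i+1) j (k+1) - 2 * v i j (k+1) + v (i-1) j (k+1)) / dx\<^sup>2
           + dd i j k * (v i (j+1) (k+1) - 2 * v i j (k+1) + v i (j-1) (k+1)) / dy\<^sup>2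
           + ff i j k"
    using assms(13) unfolding IFDS_def Let_def aa_def bb_def cc_def dd_def ff_def dx_def dy_def dt_def \<sigma>_def
    by blast
  have sv': "\<And>i j k. 1 \<le> i \<Longrightarrow> i \<le> Nx - 1 \<Longrightarrow> 1 \<le> j \<Longrightarrow> j \<le> Ny - 1 \<Longrightarrow> k \<le> Nt - 1 \<Longrightarrow>
           \<sigma> * (\<Sum>s=0..k. omega \<alpha> s * (v' i j (k - s + 1) - v' i j (k - s)))
           + aa i j k * (v' (i+1) j (k+1) - v' (i-1) j (k+1)) / (2 * dx)
           + bb i j k * (v' i (j+1) (k+1) - v' i (j-1) (k+1)) / (2 * dy)
           = cc i j k * (v' (i+1) j (k+1) - 2 * v' i j (k+1) + v' (i-1) j (k+1)) / dx\<^sup>2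
           + dd i j k * (v' i (j+1) (k+1) - 2 * v' i j (k+1) + v' i (j-1) (k+1)) / dy\<^sup>2
           + ff i j k"
    using assms(14) unfolding IFDS_def Let_def aa_def bb_def cc_def dd_def ff_def dx_def dy_def dt_def \<sigma>_def
    by blast
  have se: "\<sigma> * (\<Sum>s=0..k. omega \<alpha> s * (e i j (k - s + 1) - e i j (k - s)))
           + aa i j k * (e (i+1) j (k+1) - e (i-1) j (k+1)) / (2 * dx)
           + bb i j k * (e i (j+1) (k+1) - e i (j-1) (k+1)) / (2 * dy)
           = cc i j k * (e (i+1) j (k+1) - 2 * e i j (k+1) + e (i-1) j (k+1)) / dx\<^sup>2
           + dd i j k * (e i (j+1) (k+1) - 2 * e i j (k+1) + e i (j-1) (k+1)) / dy\<^sup>2"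
    if "1 \<le> i" "i \<le> Nx - 1" "1 \<le> j" "j \<le> Ny - 1" "k \<le> Nt - 1" for i j k
  proof -
    have sumeq: "(\<Sum>s=0..k. omega \<alpha> s * (e i j (k - s + 1) - e i j (k - s)))
      = (\<Sum>s=0..k. omega \<alpha> s * (v i j (k - s + 1) - v i j (k - s)))
       - (\<Sum>s=0..k. omega \<alpha> s * (v' i j (k - s + 1) - v' i j (k - s)))"
      unfolding e_def by (simp add: sum_subtractf[symmetric] algebra_simps)
    show ?thesis using sv[OF that] sv'[OF that] unfolding sumeq unfolding e_def
      by (simp add: algebra_simps diff_divide_distrib add_divide_distrib)
  qed
  have Xin: "xL \<le> xL + real i * dx \<and> xL + real i * dx \<le> xR" if "i \<le> Nx" for i
  proof -
    have "real i * dx \<le> real Nx * dx" using that dxp by (intro mult_right_mono) auto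
    also have "real Nx * dx = xR - xL" unfolding dx_def using assms(6) by simp
    finally show ?thesis using dxp by simp
  qed
  have Yin: "yL \<le> yL + real j * dy \<and> yL + real j * dy \<le> yR" if "j \<le> Ny" for j
  proof -
    have "real j * dy \<le> real Ny * dy" using that dyp by (intro mult_right_mono) auto
    also have "real Ny * dy = yR - yL" unfolding dy_def using assms(7) by simp
    finally show ?thesis using dyp by simp
  qed
  have Tin: "0 \<le> real (k+1) * dt \<and> real (k+1) * dt \<le> T" if "k \<le> Nt - 1" for k
  proof -
    have "real (k+1) * dt \<le> real Nt * dt" using that dtp assms(8) by (intro mult_right_mono) auto
    also have "real Nt * dt = T" unfolding dt_def using assms(8) by simp
    finally show ?thesis using dtp by simp
  qed
  have Adx: "A * dx \<le> 2 * D" and Ady: "A * dy \<le> 2 * D"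
  proof -
    have "dx \<le> 2 * D / A" "dy \<le> 2 * D / A" using assms(12) unfolding dx_def dy_def by auto
    then show "A * dx \<le> 2 * D" "A * dy \<le> 2 * D" using assms(9) by (simp_all add: field_simps)
  qed
  have coef: "0 \<le> aa i j k \<and> aa i j k * dx \<le> 2 * cc i j k \<and> 0 \<le> bb i j k \<and> bb i j k * dy \<le> 2 * dd i j k"
    if "i \<le> Nx" "j \<le> Ny" "k \<le> Nt - 1" for i j k
  proof -
    have h: "0 \<le> aa i j k \<and> aa i j k \<le> A \<and> 0 \<le> bb i j k \<and> bb i j k \<le> A \<and> D \<le> cc i j k \<and> D \<le> dd i j k"
      unfolding aa_def bb_def cc_def dd_def using B Xin[OF that(1)] Yin[OF that(2)] Tin[OF that(3)] by blast
    have "aa i j k * dx \<le> A * dx" using h dxp by (intro mult_right_mono) auto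
    moreover have "bb i j k * dy \<le> A * dy" using h dyp by (intro mult_right_mono) auto
    ultimately show ?thesis using h Adx Ady by linarith
  qed
  define I where "I = {1..Nx-1} \<times> {1..Ny-1}"
  have setI: "{\<bar>e i j k\<bar> | i j. 1 \<le> i \<and> i \<le> Nx - 1 \<and> 1 \<le> j \<and> j \<le> Ny - 1} = (\<lambda>(i,j). \<bar>e i j k\<bar>) ` I" for k
    unfolding I_def by (auto simp: image_iff) blast
  have finI: "finite I" unfolding I_def by simp
  have en: "err_norm Nx Ny e k = Max ((\<lambda>(i,j). \<bar>e i j k\<bar>) ` I)" for k
    unfolding err_norm_def setI ..
  show ?thesis
  proof (cases "Nx \<ge> 2 \<and> Ny \<ge> 2")
    case False
    then have "I = {}" unfolding I_def by auto
    then show ?thesis unfolding e_def[symmetric] en by simp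
  next
    case True
    then have Ine: "I \<noteq> {}" unfolding I_def by auto
    define M0 where "M0 = err_norm Nx Ny e 0"
    have claim: "\<forall>i j. 1 \<le> i \<and> i \<le> Nx - 1 \<and> 1 \<le> j \<and> j \<le> Ny - 1 \<longrightarrow> \<bar>e i j m\<bar> \<le> M0"
      if "m \<le> Nt" for m
      using that
    proof (induction m rule: less_induct)
      case (less m)
      show ?case
      proof (cases m)
        case 0
        show ?thesis unfolding 0 M0_def en
          by (auto intro!: Max_ge finI simp: I_def image_iff)
      next
        case (Suc k)
        have kN: "k \<le> Nt - 1" using less.prems Suc by simp
        have IH: "\<bar>e i j m'\<bar> \<le> M0" if "m' \<le> k" "1 \<le> i" "i \<le> Nx - 1" "1 \<le> j" "j \<le> Ny - 1" for m' i j
          using less.IH[of m'] that Suc less.prems by auto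
        have "Max ((\<lambda>(i,j). \<bar>e i j (k+1)\<bar>) ` I) \<in> (\<lambda>(i,j). \<bar>e i j (k+1)\<bar>) ` I"
          using finI Ine by (intro Max_in) auto
        then obtain i0 j0 where ij0: "(i0, j0) \<in> I" and pm: "\<bar>e i0 j0 (k+1)\<bar> = Max ((\<lambda>(i,j). \<bar>e i j (k+1)\<bar>) ` I)"
          by auto
        define p where "p = e i0 j0 (k+1)"
        have i0: "1 \<le> i0" "i0 \<le> Nx - 1" and j0: "1 \<le> j0" "j0 \<le> Ny - 1" using ij0 unfolding I_def by auto
        have maxp: "\<bar>e i j (k+1)\<bar> \<le> \<bar>p\<bar>" if "i \<le> Nx" "j \<le> Ny" for i j
        proof (cases "1 \<le> i \<and> i \<le> Nx - 1 \<and> 1 \<le> j \<and> j \<le> Ny - 1")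
          case True
          then have "(i, j) \<in> I" unfolding I_def by auto
          then show ?thesis unfolding p_def pm using finI by (intro Max_ge) auto
        next
          case False
          then have "i = 0 \<or> i = Nx \<or> j = 0 \<or> j = Ny" using that by auto
          then have "e i j (k+1) = 0" unfolding e_def using bv bv' that kN assms(8) by auto
          then show ?thesis by simp
        qed
        define R where "R = (\<Sum>s<k. (omega \<alpha> s - omega \<alpha> (s+1)) * e i0 j0 (k - s)) + omega \<alpha> k * e i0 j0 0"
        have R: "\<bar>R\<bar> \<le> omega \<alpha> 0 * M0" unfolding R_def
          by (rule hist_bound[where u = "\<lambda>m. e i0 j0 m"])
             (use omega_nonneg omega_decr assms(1,2) IH i0 j0 in auto)
        have ab: "(\<Sum>s=0..k. omega \<alpha> s * (e i0 j0 (k - s + 1) - e i0 j0 (k - s))) = p - R"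
          unfolding abel R_def p_def omega0 by simp
        have eq: "\<sigma> * (p - R) + aa i0 j0 k * (e (i0+1) j0 (k+1) - e (i0-1) j0 (k+1)) / (2 * dx)
           + bb i0 j0 k * (e i0 (j0+1) (k+1) - e i0 (j0-1) (k+1)) / (2 * dy)
           = cc i0 j0 k * (e (i0+1) j0 (k+1) - 2 * p + e (i0-1) j0 (k+1)) / dx\<^sup>2
           + dd i0 j0 k * (e i0 (j0+1) (k+1) - 2 * p + e i0 (j0-1) (k+1)) / dy\<^sup>2"
          using se[OF i0 j0 kN] unfolding ab p_def .
        have co: "0 \<le> aa i0 j0 k \<and> aa i0 j0 k * dx \<le> 2 * cc i0 j0 k \<and> 0 \<le> bb i0 j0 k \<and> bb i0 j0 k * dy \<le> 2 * dd i0 j0 k"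
          using coef i0 j0 kN by auto
        have nb: "\<bar>e (i0+1) j0 (k+1)\<bar> \<le> \<bar>p\<bar>" "\<bar>e (i0-1) j0 (k+1)\<bar> \<le> \<bar>p\<bar>"
          "\<bar>e i0 (j0+1) (k+1)\<bar> \<le> \<bar>p\<bar>" "\<bar>e i0 (j0-1) (k+1)\<bar> \<le> \<bar>p\<bar>"
          using i0 j0 by (intro maxp; simp)+
        have pM: "\<bar>p\<bar> \<le> M0"
          by (rule step_ineq[OF sp dxp dyp _ _ _ _ eq])
             (use co R omega0 nb in auto)
        show ?thesis
        proof (intro allI impI)
          fix i j assume "1 \<le> i \<and> i \<le> Nx - 1 \<and> 1 \<le> j \<and> j \<le> Ny - 1"
          then have "\<bar>e i j (k+1)\<bar> \<le> \<bar>p\<bar>" by (intro maxp) auto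
          then show "\<bar>e i j m\<bar> \<le> M0" using pM Suc by simp
        qed
      qed
    qed
    show ?thesis unfolding e_def[symmetric]
    proof (intro allI impI)
      fix k assume k: "1 \<le> k \<and> k \<le> Nt"
      show "err_norm Nx Ny e k \<le> err_norm Nx Ny e 0"
        unfolding en[of k] M0_def[symmetric]
        using finI Ine claim[of k] k by (subst Max_le_iff) (auto simp: I_def)
    qed
  qed
qed

end
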